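(* Let $n\ge 1$ and let $y\in\mathbb{R}^n$ satisfy $y_1\ge y_2\ge\cdots\ge y_n\ge 0$ and $y_1>0$. Define $f:(0,+\infty)\to\mathbb{R}$ by $$f(\lambda)=\sum_{i=1}^n \max\left\{1,\left(y_i/\sqrt{\lambda}\right)^2\right\}.$$ The function $f$ is continuous and strictly decreasing on $(0,y_1^2]$, with $f(\lambda)\to+\infty$ as $\lambda\to 0^+$ and $f(y_1^2)=n$. Let $C\ge\sqrt{n}$, let $\lambda(C)$ be the unique $\lambda\in(0,y_1^2]$ with $f(\lambda)=C^2$, and let $k(C)$ be the maximum index $k$ such that $y_k>\sqrt{\lambda(C)}$. Then $$\min_{q\in\mathcal{Q}}\ \max_{\sigma\in\mathbb{R}^n,\ \|\sigma\|_2\le 1}\ \sum_{i=1}^n\left(\sigma_i\frac{y_i}{q_i}\right)^2=\lambda(C),\qquad \mathcal{Q}=\{q\in\mathbb{R}^n:\ q_i\ge 1\ \forall i,\ \|q\|_2\le C\},$$ and the minimum over $q$ is attained by $$q_k=\begin{cases} y_k/\sqrt{\lambda(C)} & \text{if } k\le k(C),\\ 1 & \text{otherwise.}\end{cases}$$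
   Context: Here $\|\cdot\|_2$ is the Euclidean norm. In the paper, $y$ is a vector of nonnegative node "centralities" (e.g. column norms of a matrix $(I-\Lambda)^{-1}D$, or the vector $n^{-1}((I-\Lambda)^{-1}D)'\mathbf{1}$), $q$ is a protection vector and $\sigma$ a vector of shock standard deviations. *)

theory Defs
  imports "HOL-Analysis.Analysis"
begin

text \<open>Vectors in R^n are represented as functions nat => real, indexed by 1..n;
  values outside {1..n} are irrelevant (ignored).\<close>

definition enorm2 :: "nat \<Rightarrow> (nat \<Rightarrow> real) \<Rightarrow> real" where
  "enorm2 n v = sqrt (\<Sum>i=1..n. (v i)\<^sup>2)"

definition fcent :: "nat \<Rightarrow> (nat \<Rightarrow> real) \<Rightarrow> real \<Rightarrow> real" where
  "fcent n y lam = (\<Sum>i=1..n. max 1 ((y i / sqrt lam)\<^sup>2))"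

definition protset :: "nat \<Rightarrow> real \<Rightarrow> (nat \<Rightarrow> real) set" where
  "protset n C = {q. (\<forall>i\<in>{1..n}. q i \<ge> 1) \<and> enorm2 n q \<le> C}"

definition objvals :: "nat \<Rightarrow> (nat \<Rightarrow> real) \<Rightarrow> (nat \<Rightarrow> real) \<Rightarrow> real set" where
  "objvals n y q = {(\<Sum>i=1..n. (\<sigma> i * (y i / q i))\<^sup>2) | \<sigma>. enorm2 n \<sigma> \<le> 1}"

end

theory Submission
  imports Defs
begin

lemma fcent_alt:
  assumes "lam > 0"
  shows "fcent n y lam = (\<Sum>i=1..n. max 1 ((y i)\<^sup>2 / lam))"
  using assms by (simp add: fcent_def power_divide)

lemma obj_max:
  fixes n :: nat and y q :: "nat \<Rightarrow> real"
  assumes "n \<ge> 1"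
  defines "M \<equiv> Max ((\<lambda>i. (y i / q i)\<^sup>2) ` {1..n})"
  shows "M \<in> objvals n y q" "\<And>v. v \<in> objvals n y q \<Longrightarrow> v \<le> M"
    "Sup (objvals n y q) = M"
proof -
  let ?a = "\<lambda>i. (y i / q i)\<^sup>2"
  have ne: "?a ` {1..n} \<noteq> {}" using assms by auto
  have fin: "finite (?a ` {1..n})" by simp
  have "M \<in> ?a ` {1..n}" unfolding M_def using Max_in[OF fin ne] .
  then obtain j where j: "j \<in> {1..n}" "?a j = M" by auto
  have Mge: "\<And>i. i \<in> {1..n} \<Longrightarrow> ?a i \<le> M" unfolding M_def using fin by auto
  have M0: "M \<ge> 0" using j by (metis zero_le_power2)
  define s :: "nat \<Rightarrow> real" where "s = (\<lambda>i. if i = j then 1 else 0)"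
  have s1: "(\<Sum>i=1..n. (s i)\<^sup>2) = 1" using j unfolding s_def
    by (simp add: if_distrib[of "\<lambda>x. x\<^sup>2"] cong: if_cong)
  have s2: "(\<Sum>i=1..n. (s i * (y i / q i))\<^sup>2) = M"
  proof -
    have "(\<Sum>i=1..n. (s i * (y i / q i))\<^sup>2) = (\<Sum>i=1..n. if i = j then ?a j else 0)"
      by (rule sum.cong) (auto simp: s_def)
    also have "\<dots> = M" using j by simp
    finally show ?thesis .
  qed
  show A: "M \<in> objvals n y q" unfolding objvals_def enorm2_def
    using s1 s2 by (metis (mono_tags, lifting) mem_Collect_eq order_refl real_sqrt_one)
  show B: "\<And>v. v \<in> objvals n y q \<Longrightarrow> v \<le> M"
  proof -
    fix v assume "v \<in> objvals n y q"
    then obtain \<sigma> where v: "v = (\<Sum>i=1..n. (\<sigma> i * (y i / q i))\<^sup>2)" and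
      e: "sqrt (\<Sum>i=1..n. (\<sigma> i)\<^sup>2) \<le> 1" unfolding objvals_def enorm2_def by auto
    have e1: "(\<Sum>i=1..n. (\<sigma> i)\<^sup>2) \<le> 1" using e by simp
    have "v = (\<Sum>i=1..n. (\<sigma> i)\<^sup>2 * ?a i)" unfolding v
      by (rule sum.cong) (simp_all add: power_mult_distrib[symmetric])
    also have "\<dots> \<le> (\<Sum>i=1..n. (\<sigma> i)\<^sup>2 * M)"
      by (intro sum_mono mult_left_mono Mge) auto
    also have "\<dots> = M * (\<Sum>i=1..n. (\<sigma> i)\<^sup>2)" by (simp add: sum_distrib_left mult.commute)
    also have "\<dots> \<le> M" using e1 M0 by (simp add: mult_left_le)
    finally show "v \<le> M" .
  qed
  show "Sup (objvals n y q) = M" using cSup_eq_maximum[OF A B] by blast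
qed

theorem theorem1:
  fixes n :: nat and y :: "nat \<Rightarrow> real" and C :: real
  assumes "n \<ge> 1"
    and "\<And>i j. 1 \<le> i \<Longrightarrow> i \<le> j \<Longrightarrow> j \<le> n \<Longrightarrow> y j \<le> y i"
    and "y n \<ge> 0" and "y 1 > 0"
    and "C \<ge> sqrt (real n)"
  shows "continuous_on {0<..(y 1)\<^sup>2} (fcent n y)
     \<and> (\<forall>a b. 0 < a \<and> a < b \<and> b \<le> (y 1)\<^sup>2 \<longrightarrow> fcent n y b < fcent n y a)
     \<and> filterlim (fcent n y) at_top (at_right 0)
     \<and> fcent n y ((y 1)\<^sup>2) = real n
     \<and> (\<exists>!lam. lam \<in> {0<..(y 1)\<^sup>2} \<and> fcent n y lam = C\<^sup>2)
     \<and> (let lam = (THE lam. lam \<in> {0<..(y 1)\<^sup>2} \<and> fcent n y lam = C\<^sup>2);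
            kC = Max ({k \<in> {1..n}. y k > sqrt lam} \<union> {0});
            qopt = (\<lambda>k. if k \<le> kC then y k / sqrt lam else 1)
        in (\<forall>q \<in> protset n C. Sup (objvals n y q) \<in> objvals n y q
                \<and> (\<forall>v \<in> objvals n y q. v \<le> Sup (objvals n y q)))
           \<and> (\<forall>q \<in> protset n C. lam \<le> Sup (objvals n y q))
           \<and> qopt \<in> protset n C
           \<and> Sup (objvals n y qopt) = lam)"
proof -
  have y0: "\<And>i. i \<in> {1..n} \<Longrightarrow> 0 \<le> y i" using assms(2)[of _ n] assms(3) by fastforce
  have yle: "\<And>i. i \<in> {1..n} \<Longrightarrow> y i \<le> y 1" using assms(2) by auto
  have y1n: "1 \<in> {1..n}" using assms(1) by simp
  have Y1: "(y 1)\<^sup>2 > 0" using assms(4) by simp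
  have cont: "continuous_on {0<..(y 1)\<^sup>2} (fcent n y)"
  proof -
    have "continuous_on {0<..(y 1)\<^sup>2} (\<lambda>lam. \<Sum>i=1..n. max 1 ((y i)\<^sup>2 / lam))"
      by (intro continuous_intros) auto
    then show ?thesis by (rule continuous_on_cong[THEN iffD1, rotated 2]) (auto simp: fcent_alt)
  qed
  have dec: "\<forall>a b. 0 < a \<and> a < b \<and> b \<le> (y 1)\<^sup>2 \<longrightarrow> fcent n y b < fcent n y a"
  proof (intro allI impI)
    fix a b :: real assume ab: "0 < a \<and> a < b \<and> b \<le> (y 1)\<^sup>2"
    have le: "\<forall>i\<in>{1..n}. max 1 ((y i)\<^sup>2 / b) \<le> max 1 ((y i)\<^sup>2 / a)"
    proof
      fix i assume "i \<in> {1..n}"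
      have "(y i)\<^sup>2 / b \<le> (y i)\<^sup>2 / a" using ab by (intro divide_left_mono) auto
      then show "max 1 ((y i)\<^sup>2 / b) \<le> max 1 ((y i)\<^sup>2 / a)" by simp
    qed
    have "(y 1)\<^sup>2 / b < (y 1)\<^sup>2 / a" using ab Y1 by (intro divide_strict_left_mono) auto
    moreover have "1 \<le> (y 1)\<^sup>2 / b" using ab by simp
    ultimately have "max 1 ((y 1)\<^sup>2 / b) < max 1 ((y 1)\<^sup>2 / a)" by simp
    then have "(\<Sum>i=1..n. max 1 ((y i)\<^sup>2 / b)) < (\<Sum>i=1..n. max 1 ((y i)\<^sup>2 / a))"
      using le y1n by (intro sum_strict_mono_ex1) auto
    then show "fcent n y b < fcent n y a" using ab by (simp add: fcent_alt)
  qed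
  have lim: "filterlim (fcent n y) at_top (at_right 0)"
  proof (rule filterlim_at_top_mono)
    show "filterlim (\<lambda>x. (y 1)\<^sup>2 * inverse x) at_top (at_right 0)"
      by (rule filterlim_tendsto_pos_mult_at_top[OF tendsto_const Y1 filterlim_inverse_at_top_right])
    have "\<forall>x>0. (y 1)\<^sup>2 * inverse x \<le> fcent n y x"
    proof (intro allI impI)
      fix x :: real assume x: "x > 0"
      have "(y 1)\<^sup>2 * inverse x \<le> max 1 ((y 1)\<^sup>2 / x)" by (simp add: field_simps)
      also have "\<dots> \<le> (\<Sum>i=1..n. max 1 ((y i)\<^sup>2 / x))"
        using y1n by (intro member_le_sum) auto
      finally show "(y 1)\<^sup>2 * inverse x \<le> fcent n y x" using x by (simp add: fcent_alt)
    qed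
    then show "\<forall>\<^sub>F x in at_right 0. (y 1)\<^sup>2 * inverse x \<le> fcent n y x"
      unfolding eventually_at_right_field by (intro exI[of _ 1]) auto
  qed
  have fy1: "fcent n y ((y 1)\<^sup>2) = real n"
  proof -
    have "\<forall>i\<in>{1..n}. max 1 ((y i)\<^sup>2 / (y 1)\<^sup>2) = 1"
    proof
      fix i assume i: "i \<in> {1..n}"
      have "(y i)\<^sup>2 \<le> (y 1)\<^sup>2" using y0[OF i] yle[OF i] by (intro power_mono) auto
      then show "max 1 ((y i)\<^sup>2 / (y 1)\<^sup>2) = 1" using Y1 by simp
    qed
    then show ?thesis using Y1 by (simp add: fcent_alt)
  qed
  have C0: "C \<ge> 1" using assms(5) assms(1) by (metis of_nat_1 of_nat_mono order.trans real_sqrt_ge_one)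
  have nC: "real n \<le> C\<^sup>2" using assms(5) by (metis of_nat_0_le_iff real_sqrt_le_iff real_sqrt_pow2 power_mono real_sqrt_ge_zero)
  have ex: "\<exists>lam. lam \<in> {0<..(y 1)\<^sup>2} \<and> fcent n y lam = C\<^sup>2"
  proof -
    have "\<forall>\<^sub>F x in at_right 0. C\<^sup>2 \<le> fcent n y x" using lim by (simp add: filterlim_at_top)
    moreover have "\<forall>\<^sub>F x in at_right (0::real). x < (y 1)\<^sup>2" using Y1 eventually_at_right_less
      by (metis eventually_at_right_field)
    ultimately have "\<forall>\<^sub>F x in at_right (0::real). C\<^sup>2 \<le> fcent n y x \<and> x < (y 1)\<^sup>2 \<and> x > 0"
      by (auto elim: eventually_elim2 simp: eventually_conj_iff eventually_at_right_less)
    then obtain a where a: "C\<^sup>2 \<le> fcent n y a" "a < (y 1)\<^sup>2" "a > 0"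
      using eventually_happens'[OF trivial_limit_at_right_real] by blast
    have "continuous_on {a..(y 1)\<^sup>2} (fcent n y)"
      using a by (intro continuous_on_subset[OF cont]) auto
    then obtain x where "a \<le> x" "x \<le> (y 1)\<^sup>2" "fcent n y x = C\<^sup>2"
      using IVT2'[of "fcent n y" "(y 1)\<^sup>2" "C\<^sup>2" a] fy1 nC a by auto
    then show ?thesis using a by (intro exI[of _ x]) auto
  qed
  have uniq: "\<exists>!lam. lam \<in> {0<..(y 1)\<^sup>2} \<and> fcent n y lam = C\<^sup>2"
  proof (rule ex_ex1I[OF ex])
    fix l1 l2 assume h: "l1 \<in> {0<..(y 1)\<^sup>2} \<and> fcent n y l1 = C\<^sup>2" "l2 \<in> {0<..(y 1)\<^sup>2} \<and> fcent n y l2 = C\<^sup>2"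
    show "l1 = l2"
    proof (rule ccontr)
      assume "l1 \<noteq> l2"
      then consider "l1 < l2" | "l2 < l1" by linarith
      then show False using dec h by cases (auto, fastforce+)
    qed
  qed
  define L where "L = (THE lam. lam \<in> {0<..(y 1)\<^sup>2} \<and> fcent n y lam = C\<^sup>2)"
  have L: "L \<in> {0<..(y 1)\<^sup>2}" "fcent n y L = C\<^sup>2"
    using theI'[OF uniq] unfolding L_def by auto
  have L0: "L > 0" and Ly: "L \<le> (y 1)\<^sup>2" using L by auto
  have fL: "(\<Sum>i=1..n. max 1 ((y i)\<^sup>2 / L)) = C\<^sup>2" using L L0 by (simp add: fcent_alt)
  define kC where "kC = Max ({k \<in> {1..n}. y k > sqrt L} \<union> {0})"
  define qopt where "qopt = (\<lambda>k. if k \<le> kC then y k / sqrt L else 1)"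
  have finK: "finite ({k \<in> {1..n}. y k > sqrt L} \<union> {0})" by simp
  have kC_iff: "\<And>i. i \<in> {1..n} \<Longrightarrow> i \<le> kC \<longleftrightarrow> y i > sqrt L"
  proof
    fix i assume i: "i \<in> {1..n}" "i \<le> kC"
    have "kC \<in> {k \<in> {1..n}. y k > sqrt L} \<union> {0}" unfolding kC_def by (rule Max_in[OF finK]) auto
    then have "kC \<in> {1..n}" "y kC > sqrt L" using i by auto
    then show "y i > sqrt L" using assms(2)[of i kC] i by auto
  next
    fix i assume i: "i \<in> {1..n}" "y i > sqrt L"
    then show "i \<le> kC" unfolding kC_def using finK by (intro Max_ge) auto
  qed
  have sq: "\<And>i. i \<in> {1..n} \<Longrightarrow> (qopt i)\<^sup>2 = max 1 ((y i)\<^sup>2 / L) \<and> qopt i \<ge> 1"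
  proof -
    fix i assume i: "i \<in> {1..n}"
    show "(qopt i)\<^sup>2 = max 1 ((y i)\<^sup>2 / L) \<and> qopt i \<ge> 1"
    proof (cases "y i > sqrt L")
      case True
      then have k: "i \<le> kC" using kC_iff i by auto
      have "(sqrt L)\<^sup>2 < (y i)\<^sup>2" using True L0 by (intro power_strict_mono) auto
      then have "L < (y i)\<^sup>2" using L0 by simp
      then have "1 < (y i)\<^sup>2 / L" using L0 by simp
      moreover have "1 \<le> y i / sqrt L" using True L0 by simp
      ultimately show ?thesis using k L0 by (simp add: qopt_def power_divide)
    next
      case False
      then have k: "\<not> i \<le> kC" using kC_iff i by auto
      have "(y i)\<^sup>2 \<le> (sqrt L)\<^sup>2" using False y0[OF i] by (intro power_mono) auto
      then have "(y i)\<^sup>2 / L \<le> 1" using L0 by simp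
      then show ?thesis using k by (simp add: qopt_def)
    qed
  qed
  have qopt_in: "qopt \<in> protset n C"
  proof -
    have "(\<Sum>i=1..n. (qopt i)\<^sup>2) = C\<^sup>2" using fL sq by (metis (no_types, lifting) sum.cong)
    then have "enorm2 n qopt = C" unfolding enorm2_def using C0 by simp
    then show ?thesis unfolding protset_def using sq by auto
  qed
  have qopt_val: "Sup (objvals n y qopt) = L"
  proof -
    have all: "\<And>i. i \<in> {1..n} \<Longrightarrow> (y i / qopt i)\<^sup>2 \<le> L"
    proof -
      fix i assume i: "i \<in> {1..n}"
      show "(y i / qopt i)\<^sup>2 \<le> L"
      proof (cases "y i > sqrt L")
        case True
        then have "i \<le> kC" using kC_iff i by auto
        moreover have "y i \<noteq> 0" using True by (metis L0 not_less_iff_gr_or_eq real_sqrt_gt_zero)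
        ultimately show ?thesis using L0 by (simp add: qopt_def)
      next
        case False
        then have k: "\<not> i \<le> kC" using kC_iff i by auto
        have "(y i)\<^sup>2 \<le> (sqrt L)\<^sup>2" using False y0[OF i] by (intro power_mono) auto
        then show ?thesis using k L0 by (simp add: qopt_def)
      qed
    qed
    have one: "(y 1 / qopt 1)\<^sup>2 = L"
    proof (cases "y 1 > sqrt L")
      case True
      then have "1 \<le> kC" using kC_iff y1n by auto
      then show ?thesis using L0 assms(4) by (simp add: qopt_def)
    next
      case False
      then have k: "\<not> 1 \<le> kC" using kC_iff y1n by auto
      have "(y 1)\<^sup>2 \<le> (sqrt L)\<^sup>2" using False assms(4) by (intro power_mono) auto
      then show ?thesis using k L0 Ly by (simp add: qopt_def)
    qed
    have "Max ((\<lambda>i. (y i / qopt i)\<^sup>2) ` {1..n}) = L"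
    proof (rule Max_eqI)
      show "L \<in> (\<lambda>i. (y i / qopt i)\<^sup>2) ` {1..n}" using y1n one by (intro rev_image_eqI[of 1]) auto
    qed (use all in auto)
    then show ?thesis using obj_max(3)[OF assms(1)] by simp
  qed
  have lower: "\<forall>q \<in> protset n C. L \<le> Sup (objvals n y q)"
  proof
    fix q assume q: "q \<in> protset n C"
    have q1: "\<And>i. i \<in> {1..n} \<Longrightarrow> q i \<ge> 1" using q unfolding protset_def by auto
    have "sqrt (\<Sum>i=1..n. (q i)\<^sup>2) \<le> C" using q unfolding protset_def enorm2_def by auto
    then have qC: "(\<Sum>i=1..n. (q i)\<^sup>2) \<le> C\<^sup>2" using C0
      by (metis real_sqrt_le_iff real_sqrt_pow2 sum_nonneg zero_le_power2 power_mono real_sqrt_ge_zero)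
    show "L \<le> Sup (objvals n y q)"
    proof (rule ccontr)
      assume "\<not> L \<le> Sup (objvals n y q)"
      then have "Max ((\<lambda>i. (y i / q i)\<^sup>2) ` {1..n}) < L" using obj_max(3)[OF assms(1)] by simp
      then have lt: "\<And>i. i \<in> {1..n} \<Longrightarrow> (y i / q i)\<^sup>2 < L" by auto
      have lt2: "\<And>i. i \<in> {1..n} \<Longrightarrow> (y i)\<^sup>2 / L < (q i)\<^sup>2"
      proof -
        fix i assume i: "i \<in> {1..n}"
        have "(y i)\<^sup>2 / (q i)\<^sup>2 < L" using lt[OF i] by (simp add: power_divide)
        then have "(y i)\<^sup>2 < L * (q i)\<^sup>2" using q1[OF i] by (simp add: divide_less_eq)
        then show "(y i)\<^sup>2 / L < (q i)\<^sup>2" using L0 by (simp add: divide_less_eq mult.commute)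
      qed
      have "\<forall>i\<in>{1..n}. max 1 ((y i)\<^sup>2 / L) \<le> (q i)\<^sup>2"
        using lt2 q1 by (auto intro: less_imp_le one_le_power)
      moreover have "max 1 ((y 1)\<^sup>2 / L) < (q 1)\<^sup>2"
      proof -
        have "1 \<le> (y 1)\<^sup>2 / L" using L0 Ly by simp
        then show ?thesis using lt2[OF y1n] by simp
      qed
      ultimately have "(\<Sum>i=1..n. max 1 ((y i)\<^sup>2 / L)) < (\<Sum>i=1..n. (q i)\<^sup>2)"
        using y1n by (intro sum_strict_mono_ex1) auto
      then show False using fL qC by simp
    qed
  qed
  have attain: "\<forall>q \<in> protset n C. Sup (objvals n y q) \<in> objvals n y q
                \<and> (\<forall>v \<in> objvals n y q. v \<le> Sup (objvals n y q))"
    using obj_max[OF assms(1)] by simp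
  show ?thesis
    unfolding Let_def L_def[symmetric] kC_def[symmetric] qopt_def[symmetric]
    using cont dec lim fy1 uniq attain lower qopt_in qopt_val by blast
qed

end
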